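(* Let $D\subset\mathbb{C}^n$ be a domain containing $o$, let $\Phi^D_{o,\max}$ be a global Zhou weight related to $|f_0|^2e^{-2\varphi_0}$ on $D$, and let $\psi$ be a negative plurisubharmonic function on $D$. Then $\psi\le\sigma(\psi,\Phi^D_{o,\max})\,\Phi^D_{o,\max}$ on all of $D$.
   Context: Let $o$ be the origin; "near $o$" means on some neighborhood of $o$; "integrable near $o$" means Lebesgue integrable on some neighborhood of $o$. Let $f_0=(f_{0,1},\dots,f_{0,m})$ be holomorphic near $o$, $|f_0|^2=\sum|f_{0,j}|^2$, $\varphi_0$ plurisubharmonic near $o$ with $|f_0|^2e^{-2\varphi_0}$ integrable near $o$. A negative plurisubharmonic function $\Phi^D_{o,\max}$ on $D$ is a global Zhou weight related to $|f_0|^2e^{-2\varphi_0}$ on $D$ if: (1) $|f_0|^2e^{-2\varphi_0}|z|^{2N_0}e^{-2\Phi^D_{o,\max}}$ is integrable near $o$ for some $N_0$; (2) $|f_0|^2e^{-2\varphi_0-2\Phi^D_{o,\max}}$ is not integrable near $o$; (3) every negative plurisubharmonic $\tilde\varphi$ on $D$ with $\tilde\varphi\ge\Phi^D_{o,\max}$ on $D$ and $|f_0|^2e^{-2\varphi_0-2\tilde\varphi}$ not integrable near $o$ equals $\Phi^D_{o,\max}$ on $D$. $\sigma(\psi,\Phi):=\sup\{b\ge0:\psi\le b\Phi+O(1)\text{ near }o\}$ (with the convention $0\cdot\Phi:=0$ if $\sigma=0$). *)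

theory Defs
  imports "HOL-Analysis.Analysis"
begin

text \<open>Points of C^n are modelled as vectors of type complex^'n (for an arbitrary finite
  index type 'n); the origin o is 0.  Plurisubharmonic functions take values in
  [-\<infinity>, +\<infinity>) and are modelled as ereal-valued functions.\<close>

definition cscale :: "complex \<Rightarrow> complex^'k \<Rightarrow> complex^'k" where
  "cscale c v = (\<chi> j. c * v $ j)"

definition holo_on :: "(complex^'n) set \<Rightarrow> (complex^'n \<Rightarrow> complex^'m) \<Rightarrow> bool" where
  "holo_on U f \<longleftrightarrow> open U \<and>
     (\<forall>z\<in>U. \<exists>L. (f has_derivative L) (at z) \<and> (\<forall>c v. L (cscale c v) = cscale c (L v)))"

definition holo_near_0 :: "(complex^'n \<Rightarrow> complex^'m) \<Rightarrow> bool" where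
  "holo_near_0 f \<longleftrightarrow> (\<exists>U. open U \<and> 0 \<in> U \<and> holo_on U f)"

definition usc_on :: "(complex^'n) set \<Rightarrow> (complex^'n \<Rightarrow> ereal) \<Rightarrow> bool" where
  "usc_on D u \<longleftrightarrow> (\<forall>z\<in>D. \<forall>t. u z < t \<longrightarrow> (\<forall>\<^sub>F w in at z within D. u w < t))"

text \<open>Sub-mean value inequality on the circle {a + e^(i theta) b}: for every real upper
  bound c of u on the circle,
  u a \<le> c - (1/2pi) \<integral>_0^{2pi} (c - u(a + e^(i theta) b)) d theta,
  i.e. u a \<le> (1/2pi) \<integral>_0^{2pi} u(a + e^(i theta) b) d theta
  (the integral of an upper bounded function, with value in [-\<infinity>,\<infinity>)).\<close>
definition sub_mean :: "(complex^'n \<Rightarrow> ereal) \<Rightarrow> complex^'n \<Rightarrow> complex^'n \<Rightarrow> bool" where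
  "sub_mean u a b \<longleftrightarrow>
     (\<forall>c::real. (\<forall>\<theta>\<in>{0..2*pi}. u (a + cscale (exp (\<i> * of_real \<theta>)) b) \<le> ereal c) \<longrightarrow>
        u a \<le> ereal c - enn2ereal (\<integral>\<^sup>+ \<theta>\<in>{0..2*pi}.
                 e2ennreal (ereal c - u (a + cscale (exp (\<i> * of_real \<theta>)) b)) \<partial>lborel)
                 / ereal (2*pi))"

definition psh_on :: "(complex^'n) set \<Rightarrow> (complex^'n \<Rightarrow> ereal) \<Rightarrow> bool" where
  "psh_on D u \<longleftrightarrow> open D \<and> (\<forall>z\<in>D. u z < \<infinity>) \<and> usc_on D u \<and>
     (\<forall>a b. (\<forall>\<zeta>. cmod \<zeta> \<le> 1 \<longrightarrow> a + cscale \<zeta> b \<in> D) \<longrightarrow> sub_mean u a b)"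

definition psh_near_0 :: "(complex^'n \<Rightarrow> ereal) \<Rightarrow> bool" where
  "psh_near_0 u \<longleftrightarrow> (\<exists>U. open U \<and> 0 \<in> U \<and> psh_on U u)"

definition eexp :: "ereal \<Rightarrow> ennreal" where
  "eexp x = (case x of ereal r \<Rightarrow> ennreal (exp r) | PInfty \<Rightarrow> \<infinity> | MInfty \<Rightarrow> 0)"

definition integrable_near_0 :: "(complex^'n \<Rightarrow> ennreal) \<Rightarrow> bool" where
  "integrable_near_0 g \<longleftrightarrow> (\<exists>U. open U \<and> 0 \<in> U \<and>
     (\<lambda>z. indicator U z * g z) \<in> borel_measurable lebesgue \<and>
     (\<integral>\<^sup>+ z. indicator U z * g z \<partial>lebesgue) < \<infinity>)"

definition wt :: "(complex^'n \<Rightarrow> complex^'m) \<Rightarrow> (complex^'n \<Rightarrow> ereal) \<Rightarrow> (complex^'n \<Rightarrow> ereal)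
     \<Rightarrow> complex^'n \<Rightarrow> ennreal" where
  "wt f0 \<phi>0 \<phi> z = ennreal ((norm (f0 z))^2) * eexp (- 2 * \<phi>0 z) * eexp (- 2 * \<phi> z)"

definition domain :: "(complex^'n) set \<Rightarrow> bool" where
  "domain D \<longleftrightarrow> open D \<and> connected D \<and> D \<noteq> {}"

definition neg_psh_on :: "(complex^'n) set \<Rightarrow> (complex^'n \<Rightarrow> ereal) \<Rightarrow> bool" where
  "neg_psh_on D u \<longleftrightarrow> psh_on D u \<and> (\<forall>z\<in>D. u z < 0)"

definition global_zhou_weight ::
  "(complex^'n) set \<Rightarrow> (complex^'n \<Rightarrow> complex^'m) \<Rightarrow> (complex^'n \<Rightarrow> ereal) \<Rightarrow> (complex^'n \<Rightarrow> ereal) \<Rightarrow> bool" where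
  "global_zhou_weight D f0 \<phi>0 \<Phi> \<longleftrightarrow> neg_psh_on D \<Phi> \<and>
     (\<exists>N0::nat. integrable_near_0 (\<lambda>z. wt f0 \<phi>0 \<Phi> z * ennreal (norm z ^ (2 * N0)))) \<and>
     \<not> integrable_near_0 (wt f0 \<phi>0 \<Phi>) \<and>
     (\<forall>\<phi>'. neg_psh_on D \<phi>' \<and> (\<forall>z\<in>D. \<Phi> z \<le> \<phi>' z) \<and> \<not> integrable_near_0 (wt f0 \<phi>0 \<phi>')
        \<longrightarrow> (\<forall>z\<in>D. \<phi>' z = \<Phi> z))"

text \<open>sigma(psi, Phi) = sup{b \<ge> 0 : psi \<le> b Phi + O(1) near o}; in ereal, 0 * (-\<infinity>) = 0.\<close>
definition sigma :: "(complex^'n \<Rightarrow> ereal) \<Rightarrow> (complex^'n \<Rightarrow> ereal) \<Rightarrow> ereal" where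
  "sigma \<psi> \<Phi> = Sup {ereal b | b. b \<ge> 0 \<and>
      (\<exists>U C. open U \<and> 0 \<in> U \<and> (\<forall>z\<in>U. \<psi> z \<le> ereal b * \<Phi> z + ereal C))}"

end

theory Submission
  imports Defs
begin


lemma nn_cmult_le:
  "c * integral\<^sup>N M f \<le> integral\<^sup>N M (\<lambda>x. c * f x)"
proof -
  have "c * integral\<^sup>N M f = (SUP g \<in> {g. simple_function M g \<and> g \<le> f}. c * integral\<^sup>S M g)"
    unfolding nn_integral_def by (rule SUP_mult_left_ennreal)
  also have "\<dots> \<le> integral\<^sup>N M (\<lambda>x. c * f x)"
  proof (rule SUP_least)
    fix g assume g: "g \<in> {g. simple_function M g \<and> g \<le> f}"
    then have sg: "simple_function M g" and gf: "g \<le> f" by auto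
    have "c * integral\<^sup>S M g = integral\<^sup>S M (\<lambda>x. c * g x)"
      using simple_integral_mult[OF sg] by simp
    also have "\<dots> \<le> integral\<^sup>N M (\<lambda>x. c * f x)"
      unfolding nn_integral_def
      apply (rule SUP_upper)
      using sg gf by (auto simp: le_fun_def intro: mult_left_mono)
    finally show "c * integral\<^sup>S M g \<le> integral\<^sup>N M (\<lambda>x. c * f x)" .
  qed
  finally show ?thesis .
qed

lemma ereal_scale_less: "b > 0 \<Longrightarrow> ereal b * x < ereal r \<longleftrightarrow> x < ereal (r / b)"
  by (cases x) (auto simp: field_simps)

lemma usc_scale:
  assumes "b > 0" "usc_on D u" "\<forall>z\<in>D. u z < \<infinity>"
  shows "usc_on D (\<lambda>z. ereal b * u z)"
  unfolding usc_on_def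
proof (intro ballI allI impI)
  fix z t assume z: "z \<in> D" and lt: "ereal b * u z < t"
  show "\<forall>\<^sub>F w in at z within D. ereal b * u w < t"
  proof (cases t)
    case (real r)
    then have "u z < ereal (r/b)" using lt ereal_scale_less[OF assms(1)] by simp
    then have "\<forall>\<^sub>F w in at z within D. u w < ereal (r/b)" using assms(2) z unfolding usc_on_def by blast
    then show ?thesis by eventually_elim (use real ereal_scale_less[OF assms(1)] in simp)
  next
    case PInf
    have "\<forall>\<^sub>F w in at z within D. w \<in> D" by (simp add: eventually_at_filter)
    then show ?thesis
    proof eventually_elim
      case (elim w) then have "u w < \<infinity>" using assms(3) by blast
      then show ?case using PInf assms(1) by (cases "u w") auto
    qed
  next
    case MInf then show ?thesis using lt by simp
  qed
qed

lemma usc_max: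
  assumes "usc_on D u" "usc_on D v"
  shows "usc_on D (\<lambda>z. max (u z) (v z))"
  unfolding usc_on_def
proof (intro ballI allI impI)
  fix z t assume z: "z \<in> D" and lt: "max (u z) (v z) < t"
  have "\<forall>\<^sub>F w in at z within D. u w < t" using assms(1) z lt unfolding usc_on_def by auto
  moreover have "\<forall>\<^sub>F w in at z within D. v w < t" using assms(2) z lt unfolding usc_on_def by auto
  ultimately show "\<forall>\<^sub>F w in at z within D. max (u w) (v w) < t" by eventually_elim auto
qed

lemma sub_mean_max:
  assumes "sub_mean u a b" "sub_mean v a b"
  shows "sub_mean (\<lambda>z. max (u z) (v z)) a b"
  unfolding sub_mean_def
proof (intro allI impI)
  fix c :: real
  define P where "P \<theta> = a + cscale (exp (\<i> * of_real \<theta>)) b" for \<theta>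
  assume H: "\<forall>\<theta>\<in>{0..2*pi}. max (u (a + cscale (exp (\<i> * of_real \<theta>)) b)) (v (a + cscale (exp (\<i> * of_real \<theta>)) b)) \<le> ereal c"
  define Im where "Im = (\<integral>\<^sup>+ \<theta>\<in>{0..2*pi}. e2ennreal (ereal c - max (u (P \<theta>)) (v (P \<theta>))) \<partial>lborel)"
  have key: "w a \<le> ereal c - enn2ereal Im / ereal (2*pi)"
    if sw: "sub_mean w a b" and wle: "\<And>x. w x \<le> max (u x) (v x)" for w
  proof -
    have Hw: "\<forall>\<theta>\<in>{0..2*pi}. w (P \<theta>) \<le> ereal c"
      using H wle order_trans unfolding P_def by blast
    define Iw where "Iw = (\<integral>\<^sup>+ \<theta>\<in>{0..2*pi}. e2ennreal (ereal c - w (P \<theta>)) \<partial>lborel)"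
    have 1: "w a \<le> ereal c - enn2ereal Iw / ereal (2*pi)"
      using sw Hw unfolding sub_mean_def Iw_def P_def by blast
    have "Im \<le> Iw" unfolding Im_def Iw_def
      by (intro nn_integral_mono mult_right_mono e2ennreal_mono ereal_minus_mono) (auto simp: wle)
    then have "enn2ereal Im / ereal (2*pi) \<le> enn2ereal Iw / ereal (2*pi)"
      by (intro ereal_divide_right_mono) (auto simp: less_eq_ennreal.rep_eq)
    then have "ereal c - enn2ereal Iw / ereal (2*pi) \<le> ereal c - enn2ereal Im / ereal (2*pi)"
      by (intro ereal_minus_mono) auto
    with 1 show ?thesis by (rule order_trans)
  qed
  have "u a \<le> ereal c - enn2ereal Im / ereal (2*pi)" by (rule key[OF assms(1)]) simp
  moreover have "v a \<le> ereal c - enn2ereal Im / ereal (2*pi)" by (rule key[OF assms(2)]) simp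
  ultimately show "max (u a) (v a) \<le> ereal c - enn2ereal (\<integral>\<^sup>+ \<theta>\<in>{0..2*pi}.
        e2ennreal (ereal c - max (u (a + cscale (exp (\<i> * of_real \<theta>)) b)) (v (a + cscale (exp (\<i> * of_real \<theta>)) b))) \<partial>lborel) / ereal (2*pi)"
    unfolding Im_def P_def by simp
qed


lemma ereal_arith1:
  fixes x E1 E2 :: ereal
  assumes "x \<le> ereal (c/s) - E1 / ereal p" "E2 \<le> ereal s * E1" "0 \<le> E2" "0 \<le> E1" "p > 0" "s > 0"
  shows "ereal s * x \<le> ereal c - E2 / ereal p"
proof (cases E1)
  case (real e1)
  then obtain e2 where e2: "E2 = ereal e2" using assms(2,3) by (cases E2) auto
  have le: "e2 \<le> s * e1" using assms(2) real e2 by simp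
  show ?thesis
  proof (cases x)
    case (real r)
    have "r \<le> c/s - e1/p" using assms(1,5) real \<open>E1 = ereal e1\<close> by simp
    then have "s * r \<le> c - s*e1/p" using assms(6) by (simp add: field_simps)
    moreover have "s*e1/p \<ge> e2/p" using le assms(5) by (simp add: divide_right_mono)
    ultimately show ?thesis using real e2 assms(5) by simp
  qed (use assms real in auto)
next
  case PInf
  then have "x = -\<infinity>" using assms(1,5) by (cases x) auto
  then show ?thesis using assms by simp
qed (use assms in auto)

lemma ereal_scale_le: "b > 0 \<Longrightarrow> ereal b * x \<le> ereal r \<longleftrightarrow> x \<le> ereal (r / b)"
  by (cases x) (auto simp: field_simps)

lemma e2_scale:
  assumes "s > 0" "x \<le> ereal (c/s)"
  shows "e2ennreal (ereal c - ereal s * x) = ennreal s * e2ennreal (ereal (c/s) - x)"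
proof (cases x)
  case (real r)
  have "c - s*r = s * (c/s - r)" using assms(1) by (simp add: field_simps)
  then show ?thesis using real assms
    by (simp add: e2ennreal_ereal ennreal_mult'[symmetric] ennreal_mult''[symmetric] mult_nonneg_nonneg)
qed (use assms in auto)
lemma sub_mean_scale:
  assumes "s > 0" "sub_mean u a b"
  shows "sub_mean (\<lambda>z. ereal s * u z) a b"
  unfolding sub_mean_def
proof (intro allI impI)
  fix c :: real
  define P where "P \<theta> = a + cscale (exp (\<i> * of_real \<theta>)) b" for \<theta>
  assume H: "\<forall>\<theta>\<in>{0..2*pi}. ereal s * u (a + cscale (exp (\<i> * of_real \<theta>)) b) \<le> ereal c"
  then have H': "\<forall>\<theta>\<in>{0..2*pi}. u (P \<theta>) \<le> ereal (c/s)"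
    using ereal_scale_le[OF assms(1)] unfolding P_def by blast
  define I1 where "I1 = (\<integral>\<^sup>+ \<theta>\<in>{0..2*pi}. e2ennreal (ereal (c/s) - u (P \<theta>)) \<partial>lborel)"
  define I2 where "I2 = (\<integral>\<^sup>+ \<theta>\<in>{0..2*pi}. e2ennreal (ereal c - ereal s * u (P \<theta>)) \<partial>lborel)"
  have 1: "u a \<le> ereal (c/s) - enn2ereal I1 / ereal (2*pi)"
    using assms(2) H' unfolding sub_mean_def I1_def P_def by blast
  have I2eq: "I2 = (\<integral>\<^sup>+ \<theta>. ennreal s * (e2ennreal (ereal (c/s) - u (P \<theta>)) * indicator {0..2*pi} \<theta>) \<partial>lborel)"
    unfolding I2_def
    by (intro nn_integral_cong) (auto simp: e2_scale[OF assms(1)] H' indicator_def)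
  have "ennreal (1/s) * I2 \<le> (\<integral>\<^sup>+ \<theta>. ennreal (1/s) * (ennreal s * (e2ennreal (ereal (c/s) - u (P \<theta>)) * indicator {0..2*pi} \<theta>)) \<partial>lborel)"
    unfolding I2eq by (rule nn_cmult_le)
  also have "\<dots> = I1" unfolding I1_def
    using assms(1) by (intro nn_integral_cong) (simp add: mult.assoc[symmetric] ennreal_mult''[symmetric])
  finally have "ennreal s * (ennreal (1/s) * I2) \<le> ennreal s * I1" by (rule mult_left_mono) simp
  then have I21: "I2 \<le> ennreal s * I1"
    using assms(1) by (simp add: mult.assoc[symmetric] ennreal_mult''[symmetric])
  have "enn2ereal I2 \<le> ereal s * enn2ereal I1"
    using I21 assms(1) by (simp add: less_eq_ennreal.rep_eq times_ennreal.rep_eq)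
  from ereal_arith1[OF 1 this] assms(1)
  show "ereal s * u a \<le> ereal c - enn2ereal (\<integral>\<^sup>+ \<theta>\<in>{0..2*pi}. e2ennreal (ereal c - ereal s * u (a + cscale (exp (\<i> * of_real \<theta>)) b)) \<partial>lborel) / ereal (2*pi)"
    unfolding I2_def P_def by simp
qed

lemma bound_lem:
  fixes x y :: ereal
  assumes "x \<le> ereal b * y + ereal C" "y < 0" "x < 0" "b > 0"
  shows "max (ereal (1/b) * x) y \<le> y + ereal (\<bar>C\<bar>/b)"
proof (cases y)
  case (real r)
  show ?thesis
  proof (cases x)
    case (real q)
    have "q \<le> b*r + C" using assms(1) real \<open>y = ereal r\<close> by simp
    then have "q/b \<le> r + C/b" using assms(4) by (simp add: field_simps)
    moreover have "C/b \<le> \<bar>C\<bar>/b" using assms(4) by (simp add: divide_right_mono)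
    ultimately show ?thesis using real \<open>y = ereal r\<close> assms(4) by simp
  qed (use assms real in auto)
next
  case MInf
  then have "x = -\<infinity>" using assms(1,4) by (cases x) auto
  then show ?thesis using MInf assms(4) by simp
qed (use assms in auto)

lemma eexp_lem:
  fixes x y :: ereal
  assumes "x \<le> y + ereal K" "K \<ge> 0"
  shows "eexp (-2 * y) \<le> ennreal (exp (2*K)) * eexp (-2 * x)"
proof (cases x)
  case (real q)
  show ?thesis
  proof (cases y)
    case (real r)
    have "-2*r \<le> 2*K + -2*q" using assms(1) real \<open>x = ereal q\<close> by simp
    then have "exp (-2*r) \<le> exp (2*K) * exp (-2*q)" by (simp add: exp_add[symmetric])
    then show ?thesis using real \<open>x = ereal q\<close>
      by (simp add: eexp_def ennreal_mult''[symmetric] ennreal_leI)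
  next
    case PInf then show ?thesis by (simp add: eexp_def)
  next
    case MInf then show ?thesis using assms(1) real by simp
  qed
next
  case PInf
  then have "y = \<infinity>" using assms(1) by (cases y) auto
  then show ?thesis by (simp add: eexp_def)
next
  case MInf
  then show ?thesis by (simp add: eexp_def ennreal_mult_top)
qed

lemma wt_lem:
  assumes "x z \<le> y z + ereal K" "K \<ge> 0"
  shows "wt f0 \<phi>0 y z \<le> ennreal (exp (2*K)) * wt f0 \<phi>0 x z"
proof -
  have "wt f0 \<phi>0 y z = ennreal ((norm (f0 z))^2) * eexp (- 2 * \<phi>0 z) * eexp (-2 * y z)"
    by (simp add: wt_def)
  also have "\<dots> \<le> ennreal ((norm (f0 z))^2) * eexp (- 2 * \<phi>0 z) * (ennreal (exp (2*K)) * eexp (-2 * x z))"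
    by (intro mult_left_mono eexp_lem assms) simp
  also have "\<dots> = ennreal (exp (2*K)) * wt f0 \<phi>0 x z"
    by (simp add: wt_def ac_simps)
  finally show ?thesis .
qed

lemma meas_lem:
  fixes g :: "complex^'n \<Rightarrow> ennreal"
  assumes h: "(\<lambda>z. indicator U1 z * (g z * ennreal (norm z ^ (2*N)))) \<in> borel_measurable lebesgue"
    and W: "open W" "0 \<in> W" "W \<subseteq> U1"
  shows "(\<lambda>z. indicator W z * g z) \<in> borel_measurable lebesgue"
proof -
  have eq: "indicator W z * g z = indicator (-{0}) z * indicator W z * (indicator U1 z * (g z * ennreal (norm z ^ (2*N)))) * ennreal (1 / norm z ^ (2*N))
      + indicator {0} z * g 0" for z
  proof (cases "z = 0")
    case True then show ?thesis using W by (simp add: indicator_def)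
  next
    case False
    then have "ennreal (norm z ^ (2*N)) * ennreal (1 / norm z ^ (2*N)) = 1"
      by (simp add: ennreal_mult''[symmetric])
    then show ?thesis using False W
      by (auto simp: indicator_def mult.assoc)
  qed
  have mW: "(\<lambda>z. indicator W z :: ennreal) \<in> borel_measurable lebesgue"
    using W(1) by (intro borel_measurable_indicator) (simp add: borel_open)
  have m0: "(\<lambda>z. indicator {0::complex^'n} z :: ennreal) \<in> borel_measurable lebesgue"
    by (intro borel_measurable_indicator) simp
  have m0': "(\<lambda>z. indicator (-{0::complex^'n}) z :: ennreal) \<in> borel_measurable lebesgue"
    by (intro borel_measurable_indicator) (simp add: borel_open)
  have m1: "(\<lambda>z::complex^'n. ennreal (1 / norm z ^ (2*N))) \<in> borel_measurable lebesgue"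
    by (rule measurable_completion) (simp add: measurable_lborel1)
  show ?thesis
    unfolding eq using mW m0 m0' m1 h by measurable
qed
lemma psh_scale:
  assumes "s > 0" "psh_on D u"
  shows "psh_on D (\<lambda>z. ereal s * u z)"
proof -
  have fin: "\<forall>z\<in>D. u z < \<infinity>" using assms(2) by (simp add: psh_on_def)
  have "\<forall>z\<in>D. ereal s * u z < \<infinity>"
  proof
    fix z assume "z \<in> D" then have "u z < \<infinity>" using fin by blast
    then show "ereal s * u z < \<infinity>" using assms(1) by (cases "u z") auto
  qed
  then show ?thesis using assms usc_scale[OF assms(1) _ fin] sub_mean_scale[OF assms(1)]
    unfolding psh_on_def by blast
qed

lemma psh_max:
  assumes "psh_on D u" "psh_on D v"
  shows "psh_on D (\<lambda>z. max (u z) (v z))"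
proof -
  have "\<forall>z\<in>D. max (u z) (v z) < \<infinity>" using assms unfolding psh_on_def by (auto simp: max_def)
  then show ?thesis using assms usc_max sub_mean_max unfolding psh_on_def by blast
qed

lemma scale_back:
  fixes x y :: ereal
  assumes "b > 0" "ereal (1/b) * x \<le> y"
  shows "x \<le> ereal b * y"
proof (cases x)
  case (real q)
  show ?thesis
  proof (cases y)
    case (real r)
    have "q/b \<le> r" using assms(2) real \<open>x = ereal q\<close> by simp
    then have "q \<le> b * r" using assms(1) by (simp add: field_simps)
    then show ?thesis using real \<open>x = ereal q\<close> by simp
  qed (use assms real in auto)
next
  case PInf
  then have "y = \<infinity>" using assms by (cases y) auto
  then show ?thesis using assms PInf by simp
qed simp

lemma key_b:
  fixes \<Phi> \<psi> :: "complex^'n \<Rightarrow> ereal" and f0 :: "complex^'n \<Rightarrow> complex^'m"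
  assumes Z: "global_zhou_weight D f0 \<phi>0 \<Phi>" and P: "neg_psh_on D \<psi>"
    and b: "b > 0" and U: "open U" "0 \<in> U" and D0: "0 \<in> D" and oD: "open D"
    and H: "\<forall>z\<in>U. \<psi> z \<le> ereal b * \<Phi> z + ereal C"
  shows "\<forall>z\<in>D. \<psi> z \<le> ereal b * \<Phi> z"
proof -
  define K where "K = \<bar>C\<bar>/b"
  have K0: "K \<ge> 0" using b by (simp add: K_def)
  define \<phi>' where "\<phi>' z = max (ereal (1/b) * \<psi> z) (\<Phi> z)" for z
  have nP: "neg_psh_on D \<Phi>" using Z by (simp add: global_zhou_weight_def)
  have psh': "psh_on D \<phi>'" unfolding \<phi>'_def
    using psh_max[OF psh_scale[of "1/b" D \<psi>]] b P nP by (simp add: neg_psh_on_def)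
  have neg': "neg_psh_on D \<phi>'"
    unfolding neg_psh_on_def
  proof (intro conjI psh' ballI)
    fix z assume z: "z \<in> D"
    then have "\<psi> z < 0" "\<Phi> z < 0" using P nP by (auto simp: neg_psh_on_def)
    moreover have "ereal (1/b) * \<psi> z < 0" using \<open>\<psi> z < 0\<close> b by (cases "\<psi> z") (auto simp: divide_neg_pos)
    ultimately show "\<phi>' z < 0" by (simp add: \<phi>'_def)
  qed
  have ge: "\<forall>z\<in>D. \<Phi> z \<le> \<phi>' z" by (simp add: \<phi>'_def)
  have bnd: "\<phi>' z \<le> \<Phi> z + ereal K" if z: "z \<in> U \<inter> D" for z
  proof -
    have "\<psi> z < 0" "\<Phi> z < 0" using z P nP by (auto simp: neg_psh_on_def)
    then show ?thesis using bound_lem[of "\<psi> z" b "\<Phi> z" C] H z b unfolding \<phi>'_def K_def by auto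
  qed
  have wle: "wt f0 \<phi>0 \<Phi> z \<le> ennreal (exp (2*K)) * wt f0 \<phi>0 \<phi>' z" if z: "z \<in> U \<inter> D" for z
    by (rule wt_lem[where x=\<phi>' and y=\<Phi>, OF bnd[OF z] K0])
  have nonint: "\<not> integrable_near_0 (wt f0 \<phi>0 \<phi>')"
  proof
    assume "integrable_near_0 (wt f0 \<phi>0 \<phi>')"
    then obtain V where V: "open V" "0 \<in> V"
      and Vm: "(\<lambda>z. indicator V z * wt f0 \<phi>0 \<phi>' z) \<in> borel_measurable lebesgue"
      and Vf: "(\<integral>\<^sup>+ z. indicator V z * wt f0 \<phi>0 \<phi>' z \<partial>lebesgue) < \<infinity>"
      unfolding integrable_near_0_def by blast
    from Z obtain N0 U1 where U1: "open U1" "0 \<in> U1"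
      and h: "(\<lambda>z. indicator U1 z * (wt f0 \<phi>0 \<Phi> z * ennreal (norm z ^ (2 * N0)))) \<in> borel_measurable lebesgue"
      unfolding global_zhou_weight_def integrable_near_0_def by blast
    define W where "W = V \<inter> U \<inter> U1 \<inter> D"
    have W: "open W" "0 \<in> W" "W \<subseteq> U1" using V U U1 D0 oD by (auto simp: W_def)
    have "(\<integral>\<^sup>+ z. indicator W z * wt f0 \<phi>0 \<Phi> z \<partial>lebesgue)
        \<le> (\<integral>\<^sup>+ z. ennreal (exp (2*K)) * (indicator V z * wt f0 \<phi>0 \<phi>' z) \<partial>lebesgue)"
    proof (rule nn_integral_mono)
      fix z
      show "indicator W z * wt f0 \<phi>0 \<Phi> z \<le> ennreal (exp (2*K)) * (indicator V z * wt f0 \<phi>0 \<phi>' z)"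
      proof (cases "z \<in> W")
        case True
        then have "z \<in> U \<inter> D" "z \<in> V" by (auto simp: W_def)
        then show ?thesis using wle[of z] True by simp
      qed simp
    qed
    also have "\<dots> = ennreal (exp (2*K)) * (\<integral>\<^sup>+ z. indicator V z * wt f0 \<phi>0 \<phi>' z \<partial>lebesgue)"
      by (rule nn_integral_cmult[OF Vm])
    also have "\<dots> < \<infinity>" using Vf by (simp add: ennreal_mult_less_top)
    finally have "integrable_near_0 (wt f0 \<phi>0 \<Phi>)"
      unfolding integrable_near_0_def using W meas_lem[OF h W] by blast
    then show False using Z by (simp add: global_zhou_weight_def)
  qed
  from Z neg' ge nonint have eq: "\<forall>z\<in>D. \<phi>' z = \<Phi> z"
    unfolding global_zhou_weight_def by blast
  show ?thesis
  proof
    fix z assume "z \<in> D"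
    then have "ereal (1/b) * \<psi> z \<le> \<Phi> z" using eq unfolding \<phi>'_def by (metis max.cobounded1)
    then show "\<psi> z \<le> ereal b * \<Phi> z" by (rule scale_back[OF b])
  qed
qed

theorem lemma8p9:
  fixes D :: "(complex^'n) set"
    and f0 :: "complex^'n \<Rightarrow> complex^'m"
    and \<phi>0 \<Phi> \<psi> :: "complex^'n \<Rightarrow> ereal"
  assumes "domain D" and "0 \<in> D"
    and "holo_near_0 f0"
    and "psh_near_0 \<phi>0"
    and "integrable_near_0 (\<lambda>z. ennreal ((norm (f0 z))^2) * eexp (- 2 * \<phi>0 z))"
    and "global_zhou_weight D f0 \<phi>0 \<Phi>"
    and "neg_psh_on D \<psi>"
  shows "\<forall>z\<in>D. \<psi> z \<le> sigma \<psi> \<Phi> * \<Phi> z"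
proof
  fix z assume z: "z \<in> D"
  define S where "S = {ereal b | b. b \<ge> 0 \<and>
      (\<exists>U C. open U \<and> 0 \<in> U \<and> (\<forall>z\<in>U. \<psi> z \<le> ereal b * \<Phi> z + ereal C))}"
  have sig: "sigma \<psi> \<Phi> = Sup S" unfolding sigma_def S_def by simp
  have oD: "open D" using assms(1) by (simp add: domain_def)
  have nP: "neg_psh_on D \<Phi>" using assms(6) by (simp add: global_zhou_weight_def)
  have psz: "\<psi> z < 0" and pz: "\<Phi> z < 0" using z assms(7) nP by (auto simp: neg_psh_on_def)
  have hb: "\<psi> z \<le> x * \<Phi> z" if "x \<in> S" for x
  proof -
    obtain b U C where x: "x = ereal b" "b \<ge> 0" "open U" "0 \<in> U"
      "\<forall>z\<in>U. \<psi> z \<le> ereal b * \<Phi> z + ereal C" using \<open>x \<in> S\<close> unfolding S_def by blast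
    show ?thesis
    proof (cases "b = 0")
      case True then show ?thesis using x psz by (simp add: zero_ereal_def[symmetric])
    next
      case False
      then have "b > 0" using x by simp
      from key_b[OF assms(6,7) this x(3,4) assms(2) oD x(5)] z x(1) show ?thesis by simp
    qed
  qed
  have "0 \<in> S" unfolding S_def
  proof (intro CollectI exI conjI)
    show "0 = ereal 0" by simp
    show "\<forall>z\<in>D. \<psi> z \<le> ereal 0 * \<Phi> z + ereal 0"
      using assms(7) by (auto simp: neg_psh_on_def less_imp_le zero_ereal_def[symmetric])
  qed (use oD assms(2) in auto)
  then have sig0: "sigma \<psi> \<Phi> \<ge> 0" unfolding sig by (rule Sup_upper)
  show "\<psi> z \<le> sigma \<psi> \<Phi> * \<Phi> z"
  proof (cases "\<psi> z")
    case MInf then show ?thesis by simp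
  next
    case PInf then show ?thesis using psz by simp
  next
    case (real p)
    show ?thesis
    proof (cases "\<Phi> z")
      case MInf
      show ?thesis
      proof (cases "sigma \<psi> \<Phi> = 0")
        case True then show ?thesis using psz by simp
      next
        case False
        then have "0 < Sup S" using sig0 sig by simp
        then obtain x where "x \<in> S" "0 < x" by (auto simp: less_Sup_iff)
        then have "\<psi> z \<le> x * \<Phi> z" by (intro hb)
        moreover have "x * \<Phi> z = -\<infinity>" using \<open>0 < x\<close> MInf by simp
        ultimately show ?thesis using real by simp
      qed
    next
      case PInf then show ?thesis using pz by simp
    next
      case (real r)
      have r0: "r < 0" using pz real by simp
      have "Sup S \<le> ereal (p/r)"
      proof (rule Sup_least)
        fix x assume "x \<in> S"
        then obtain b where b: "x = ereal b" using S_def by auto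
        have "p \<le> b * r" using hb[OF \<open>x \<in> S\<close>] b real \<open>\<psi> z = ereal p\<close> by simp
        then have "b \<le> p / r" using r0 by (simp add: field_simps)
        then show "x \<le> ereal (p/r)" using b by simp
      qed
      then obtain s where s: "sigma \<psi> \<Phi> = ereal s" "0 \<le> s" "s \<le> p/r"
        using sig0 sig by (cases "Sup S") auto
      have "(p/r) * r \<le> s * r" using s(3) r0 by (intro mult_right_mono_neg) auto
      then have "p \<le> s * r" using r0 by simp
      then show ?thesis using s real \<open>\<psi> z = ereal p\<close> by simp
    qed
  qed
qed

end
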